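(* Let $m\ge 1$ and $n \ge 2m-2$ be integers. Then for every real $r$ with $|r|>1$, $$\int_{-1}^1 \frac{U_n(s)(1-s^2)^{m-\frac{1}{2}}}{s-r}\,ds = \pi(-1)^{m}(r^2-1)^{m-1}\left(r-\frac{|r|}{r}\sqrt{r^2-1}\right)^{n+1}.$$
   Context: $U_k(s)=\frac{\sin((k+1)\cos^{-1}s)}{\sin(\cos^{-1}s)}$ is the Tchebyshev polynomial of the second kind. Since $|r|>1$, the integrand has no singularity on $[-1,1]$ and the integral is an ordinary integral. *)

theory Defs
  imports "HOL-Analysis.Analysis"
begin

text \<open>Chebyshev polynomial of the second kind, defined as in the paper via
  the trigonometric formula (valid on [-1,1]).\<close>
definition chebU :: "nat \<Rightarrow> real \<Rightarrow> real" where
  "chebU k s = sin (real (k + 1) * arccos s) / sin (arccos s)"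

end

theory Submission
  imports Defs
begin



definition Aint :: "nat \<Rightarrow> nat \<Rightarrow> real" where
  "Aint k p = integral {0..pi} (\<lambda>t. sin (real k * t) * sin t ^ p)"

lemma A_int: "(\<lambda>t. sin (real k * t) * sin t ^ p) integrable_on {0..pi}"
  by (intro integrable_continuous_interval continuous_intros)

lemma A_has: "((\<lambda>t. sin (real k * t) * sin t ^ p) has_integral Aint k p) {0..pi}"
  unfolding Aint_def by (rule integrable_integral[OF A_int])

lemma sin_sq_id:
  assumes "k \<ge> 2"
  shows "sin (real k * t) * (sin t)\<^sup>2 = sin (real k * t) / 2 - sin (real (k+2) * t) / 4 - sin (real (k-2) * t) / 4"
proof -
  have e1: "real (k+2) * t = real k * t + 2 * t" by (simp add: algebra_simps)
  have e2: "real (k-2) * t = real k * t - 2 * t" using assms by (simp add: of_nat_diff algebra_simps)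
  show ?thesis unfolding e1 e2 sin_add sin_diff cos_double_sin
    by (simp add: field_simps)
qed

lemma A_step:
  assumes "k \<ge> 2"
  shows "Aint k (p+2) = Aint k p / 2 - Aint (k+2) p / 4 - Aint (k-2) p / 4"
proof -
  have "((\<lambda>t. sin (real k * t) * sin t ^ p / 2 - sin (real (k+2) * t) * sin t ^ p / 4
            - sin (real (k-2) * t) * sin t ^ p / 4) has_integral
         (Aint k p / 2 - Aint (k+2) p / 4 - Aint (k-2) p / 4)) {0..pi}"
    by (intro has_integral_diff has_integral_divide A_has)
  moreover have "\<And>t. sin (real k * t) * sin t ^ p / 2 - sin (real (k+2) * t) * sin t ^ p / 4
            - sin (real (k-2) * t) * sin t ^ p / 4 = sin (real k * t) * sin t ^ (p+2)"
  proof -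
    fix t
    have "sin (real k * t) * sin t ^ (p+2) = (sin (real k * t) * (sin t)\<^sup>2) * sin t ^ p"
      by (simp add: power_add power2_eq_square)
    also have "\<dots> = (sin (real k * t) / 2 - sin (real (k+2) * t) / 4 - sin (real (k-2) * t) / 4) * sin t ^ p"
      using sin_sq_id[OF assms] by simp
    finally show "sin (real k * t) * sin t ^ p / 2 - sin (real (k+2) * t) * sin t ^ p / 4
            - sin (real (k-2) * t) * sin t ^ p / 4 = sin (real k * t) * sin t ^ (p+2)"
      by (simp add: algebra_simps)
  qed
  ultimately have "((\<lambda>t. sin (real k * t) * sin t ^ (p+2)) has_integral
         (Aint k p / 2 - Aint (k+2) p / 4 - Aint (k-2) p / 4)) {0..pi}" by simp
  then show ?thesis unfolding Aint_def by (rule integral_unique)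
qed

lemma A1_zero':
  "Aint (j+2) 1 = 0"
proof -
  define a where "a = real j + 1"
  define b where "b = real j + 3"
  have apos: "a > 0" "b > 0" unfolding a_def b_def by auto
  let ?P = "\<lambda>t. sin (a * t) / (2 * a) - sin (b * t) / (2 * b)"
  have "((\<lambda>t. sin (real (j+2) * t) * sin t ^ 1) has_integral (?P pi - ?P 0)) {0..pi}"
  proof (rule fundamental_theorem_of_calculus)
    fix x :: real
    have "(?P has_real_derivative (cos (a * x) / 2 - cos (b * x) / 2)) (at x within {0..pi})"
      using apos by (auto intro!: derivative_eq_intros simp: field_simps)
    moreover have "cos (a * x) / 2 - cos (b * x) / 2 = sin (real (j+2) * x) * sin x ^ 1"
    proof -
      have a: "a * x = real (j+2) * x - x" unfolding a_def by (simp add: algebra_simps)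
      have b: "b * x = real (j+2) * x + x" unfolding b_def by (simp add: algebra_simps)
      show ?thesis unfolding a b cos_add cos_diff
        by (simp add: field_simps)
    qed
    ultimately show "(?P has_vector_derivative sin (real (j+2) * x) * sin x ^ 1) (at x within {0..pi})"
      by (simp add: has_real_derivative_iff_has_vector_derivative)
  qed simp
  moreover have "?P pi - ?P 0 = 0"
  proof -
    have "sin (a * pi) = 0" using sin_npi[of "j+1"] unfolding a_def by (simp add: add.commute)
    moreover have "sin (b * pi) = 0" using sin_npi[of "j+3"] unfolding b_def by simp
    ultimately show ?thesis by simp
  qed
  ultimately show ?thesis unfolding Aint_def by (simp add: integral_unique)
qed

lemma A1_zero:
  assumes "k \<ge> 2"
  shows "Aint k 1 = 0"
proof -
  have "k = (k-2)+2" using assms by simp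
  then show ?thesis by (metis A1_zero')
qed

lemma A11: "Aint 1 1 = pi / 2"
proof -
  let ?P = "\<lambda>t. t / 2 - sin (2 * t) / 4"
  have "((\<lambda>t. sin (real 1 * t) * sin t ^ 1) has_integral (?P pi - ?P 0)) {0..pi}"
  proof (rule fundamental_theorem_of_calculus)
    fix x :: real
    have "(?P has_real_derivative (1/2 - cos (2 * x) * 2 / 4)) (at x within {0..pi})"
      by (auto intro!: derivative_eq_intros)
    moreover have "1/2 - cos (2 * x) * 2 / 4 = sin (real 1 * x) * sin x ^ 1"
      unfolding cos_double_sin by (simp add: power2_eq_square field_simps)
    ultimately show "(?P has_vector_derivative sin (real 1 * x) * sin x ^ 1) (at x within {0..pi})"
      by (simp add: has_real_derivative_iff_has_vector_derivative)
  qed simp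
  then show ?thesis unfolding Aint_def by (simp add: integral_unique)
qed

lemma A_zero: "k > 2 * j + 1 \<Longrightarrow> Aint k (2 * j + 1) = 0"
proof (induction j arbitrary: k)
  case 0 then show ?case using A1_zero by simp
next
  case (Suc j)
  have "Aint k (2 * Suc j + 1) = Aint k ((2*j+1)+2)" by simp
  also have "\<dots> = Aint k (2*j+1) / 2 - Aint (k+2) (2*j+1) / 4 - Aint (k-2) (2*j+1) / 4"
    using Suc.prems by (intro A_step) simp
  also have "\<dots> = 0" using Suc.prems Suc.IH[of k] Suc.IH[of "k+2"] Suc.IH[of "k-2"] by simp
  finally show ?case .
qed


definition Gint :: "real \<Rightarrow> nat \<Rightarrow> nat \<Rightarrow> real" where
  "Gint r k p = integral {0..pi} (\<lambda>t. sin (real k * t) * sin t ^ p / (cos t - r))"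

definition rho :: "real \<Rightarrow> real" where "rho x = x - (\<bar>x\<bar>/x) * sqrt (x\<^sup>2 - 1)"

lemma alg_m:
  fixes a b0 b2 c r Y :: real
  assumes h: "c - r \<noteq> 0" and sc: "b2 + b0 = 2*a*c"
  shows "(1-r\<^sup>2)*(a*Y/(c-r)) - r*(a*Y) - b2*Y/2 - b0*Y/2 = a*(Y*(1-c*c))/(c-r)"
proof -
  have 1: "b2*Y/2 + b0*Y/2 = a*Y*c"
  proof -
    have "b2*Y/2 + b0*Y/2 = (b2+b0)*Y/2" by (simp add: field_simps)
    then show ?thesis using sc by simp
  qed
  have 2: "a*(Y*(1-c*c))/(c-r) = ((1-r\<^sup>2)*(a*Y) - (a*Y*(c+r))*(c-r))/(c-r)"
    by (rule arg_cong[where f="\<lambda>u. u/(c-r)"]) (simp add: algebra_simps power2_eq_square)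
  have 3: "((1-r\<^sup>2)*(a*Y) - (a*Y*(c+r))*(c-r))/(c-r) = (1-r\<^sup>2)*(a*Y/(c-r)) - a*Y*(c+r)"
    using h by (simp add: diff_divide_distrib)
  have 4: "a*Y*(c+r) = r*(a*Y) + a*Y*c" by (simp add: algebra_simps)
  show ?thesis using 1 2 3 4 by linarith
qed

context fixes r :: real assumes r: "\<bar>r\<bar> > 1" begin

lemma D_nz: "r - cos t \<noteq> 0"
proof -
  show ?thesis using r cos_le_one[of t] cos_ge_minus_one[of t] by arith
qed

lemma D_nz': "cos t - r \<noteq> 0"
  using D_nz by auto

lemma r2_gt: "r\<^sup>2 - 1 > 0"
  using r abs_square_le_1[of r] by linarith

lemma one_minus_w2:
  "1 - ((r * cos t - 1) / (r - cos t))\<^sup>2 = (r\<^sup>2 - 1) * (sin t)\<^sup>2 / (r - cos t)\<^sup>2"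
proof -
  have d: "(r - cos t)\<^sup>2 \<noteq> 0" using D_nz by simp
  have s: "sin t * sin t = 1 - cos t * cos t" using sin_squared_eq[of t] by (simp add: power2_eq_square)
  show ?thesis using d by (simp add: field_simps power2_eq_square s)
qed

lemma abs_D: "\<bar>r - cos t\<bar> = (\<bar>r\<bar>/r) * (r - cos t)"
proof (cases "r > 0")
  case True
  then have "\<bar>r - cos t\<bar> = r - cos t" using r cos_le_one[of t] cos_ge_minus_one[of t] by arith
  then show ?thesis using True by simp
next
  case False
  then have "\<bar>r - cos t\<bar> = -(r - cos t)" using r cos_le_one[of t] cos_ge_minus_one[of t] by arith
  then show ?thesis using False r by simp
qed

lemma B_int: "((\<lambda>t. 1 / (cos t - r)) has_integral (-(\<bar>r\<bar>/r) * pi / sqrt (r\<^sup>2 - 1))) {0..pi}"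
proof -
  define S where "S = sqrt (r\<^sup>2 - 1)"
  have S0: "S > 0" unfolding S_def using r2_gt by simp
  have S2: "S\<^sup>2 = r\<^sup>2 - 1" unfolding S_def using r2_gt by simp
  define w where "w t = (r * cos t - 1) / (r - cos t)" for t
  have wbd: "-1 \<le> w t \<and> w t \<le> 1" for t
  proof -
    have "1 - (w t)\<^sup>2 \<ge> 0" unfolding w_def one_minus_w2 using r2_gt by simp
    then have "(w t)\<^sup>2 \<le> 1" by simp
    then have "\<bar>w t\<bar> \<le> 1" by (simp add: abs_square_le_1)
    then show ?thesis by auto
  qed
  have cont: "continuous_on {0..pi} (\<lambda>t. arccos (w t))"
    unfolding w_def
    by (intro continuous_intros) (use D_nz wbd[unfolded w_def] in auto)
  have deriv: "((\<lambda>t. arccos (w t)) has_vector_derivative S / \<bar>r - cos t\<bar>) (at t)"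
    if t: "t \<in> {0<..<pi}" for t
  proof -
    have sp: "sin t > 0" using t by (auto intro: sin_gt_zero)
    have d: "r - cos t \<noteq> 0" by (rule D_nz)
    have e: "1 - (w t)\<^sup>2 = (S * sin t / \<bar>r - cos t\<bar>)\<^sup>2"
      unfolding w_def one_minus_w2 using S2 by (simp add: power_divide power_mult_distrib)
    have pos: "S * sin t / \<bar>r - cos t\<bar> > 0" using S0 sp d by simp
    have sq: "sqrt (1 - (w t)\<^sup>2) = S * sin t / \<bar>r - cos t\<bar>"
      by (simp only: e real_sqrt_abs abs_of_pos[OF pos])
    have "(S * sin t / \<bar>r - cos t\<bar>)\<^sup>2 > 0" using pos by (intro zero_less_power) 
    then have "(w t)\<^sup>2 < 1" using e by linarith
    then have wb: "-1 < w t" "w t < 1" by (auto simp: abs_square_less_1)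
    have dw: "(w has_real_derivative (sin t * (1 - r\<^sup>2) / (r - cos t)\<^sup>2)) (at t)"
      unfolding w_def using d
      by (auto intro!: derivative_eq_intros simp: field_simps power2_eq_square)
    have da: "DERIV arccos (w t) :> inverse (- sqrt (1 - (w t)\<^sup>2))"
      by (rule DERIV_arccos[OF wb])
    have ch: "((\<lambda>x. arccos (w x)) has_real_derivative
        inverse (- sqrt (1 - (w t)\<^sup>2)) * (sin t * (1 - r\<^sup>2) / (r - cos t)\<^sup>2)) (at t)"
      by (rule DERIV_chain'[OF dw da])
    define dd where "dd = \<bar>r - cos t\<bar>"
    have ad: "dd > 0" using d unfolding dd_def by simp
    have a2: "(r - cos t)\<^sup>2 = dd\<^sup>2" unfolding dd_def by simp
    have s2: "1 - r\<^sup>2 = - (S\<^sup>2)" using S2 by simp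
    have "inverse (- sqrt (1 - (w t)\<^sup>2)) * (sin t * (1 - r\<^sup>2) / (r - cos t)\<^sup>2) = S / \<bar>r - cos t\<bar>"
      unfolding sq a2 s2 dd_def[symmetric] using S0 sp ad
      by (simp add: field_simps power2_eq_square)
    with ch show ?thesis by (simp add: has_real_derivative_iff_has_vector_derivative)
  qed
  have w0: "w 0 = 1" unfolding w_def using D_nz[of 0] by simp
  have wpi: "w pi = -1" unfolding w_def using D_nz[of pi] by (simp add: field_simps)
  have "((\<lambda>t. S / \<bar>r - cos t\<bar>) has_integral (arccos (w pi) - arccos (w 0))) {0..pi}"
    by (rule fundamental_theorem_of_calculus_interior[OF _ cont deriv]) auto
  then have "((\<lambda>t. S / \<bar>r - cos t\<bar>) has_integral pi) {0..pi}" using w0 wpi by simp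
  then have "((\<lambda>t. (-(\<bar>r\<bar>/r) / S) * (S / \<bar>r - cos t\<bar>)) has_integral ((-(\<bar>r\<bar>/r) / S) * pi)) {0..pi}"
    by (rule has_integral_mult_right)
  moreover have "(-(\<bar>r\<bar>/r) / S) * (S / \<bar>r - cos t\<bar>) = 1 / (cos t - r)" for t
  proof -
    have rn: "r \<noteq> 0" using r by auto
    have "(\<bar>r\<bar>/r) * (\<bar>r\<bar>/r) = 1" using rn by (simp add: field_simps abs_mult_self_eq)
    then show ?thesis unfolding abs_D using S0 D_nz[of t] rn
      by (simp add: field_simps)
  qed
  ultimately show ?thesis unfolding S_def by simp
qed



lemma G_int: "(\<lambda>t. sin (real k * t) * sin t ^ p / (cos t - r)) integrable_on {0..pi}"
  by (intro integrable_continuous_interval continuous_intros) (use D_nz' in auto)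

lemma G_has: "((\<lambda>t. sin (real k * t) * sin t ^ p / (cos t - r)) has_integral Gint r k p) {0..pi}"
  unfolding Gint_def by (rule integrable_integral[OF G_int])

lemma G_mstep:
  assumes "n \<ge> 2 * j + 2"
  shows "Gint r (n+1) (2*j+3) = (1 - r\<^sup>2) * Gint r (n+1) (2*j+1)"
proof -
  have A0: "Aint (n+1) (2*j+1) = 0" "Aint (n+2) (2*j+1) = 0" "Aint n (2*j+1) = 0"
    by (rule A_zero, use assms in simp)+
  have "((\<lambda>t. (1 - r\<^sup>2) * (sin (real (n+1) * t) * sin t ^ (2*j+1) / (cos t - r))
      - r * (sin (real (n+1) * t) * sin t ^ (2*j+1))
      - sin (real (n+2) * t) * sin t ^ (2*j+1) / 2
      - sin (real n * t) * sin t ^ (2*j+1) / 2) has_integral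
      ((1 - r\<^sup>2) * Gint r (n+1) (2*j+1) - r * Aint (n+1) (2*j+1) - Aint (n+2) (2*j+1) / 2
        - Aint n (2*j+1) / 2)) {0..pi}"
    by (intro has_integral_diff has_integral_divide has_integral_mult_right A_has G_has)
  moreover have "(1 - r\<^sup>2) * (sin (real (n+1) * t) * sin t ^ (2*j+1) / (cos t - r))
      - r * (sin (real (n+1) * t) * sin t ^ (2*j+1))
      - sin (real (n+2) * t) * sin t ^ (2*j+1) / 2
      - sin (real n * t) * sin t ^ (2*j+1) / 2
      = sin (real (n+1) * t) * sin t ^ (2*j+3) / (cos t - r)" for t
  proof -
    define Y where "Y = sin t ^ (2*j+1)"
    have e1: "real (n+2) * t = real (n+1) * t + t" by (simp add: algebra_simps)
    have e2: "real n * t = real (n+1) * t - t" by (simp add: algebra_simps)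
    have sc: "sin (real (n+2) * t) + sin (real n * t) = 2 * sin (real (n+1) * t) * cos t"
      unfolding e1 e2 sin_add sin_diff by simp
    have p3: "sin t ^ (2*j+3) = Y * (1 - cos t * cos t)"
    proof -
      have "sin t ^ (2*j+3) = sin t ^ (2*j+1) * (sin t)\<^sup>2"
        unfolding power_add[symmetric] by (simp add: eval_nat_numeral)
      then show ?thesis unfolding Y_def sin_squared_eq by (simp add: power2_eq_square)
    qed
    show ?thesis unfolding p3 Y_def[symmetric] by (rule alg_m[OF D_nz'[of t] sc])
  qed
  ultimately have "((\<lambda>t. sin (real (n+1) * t) * sin t ^ (2*j+3) / (cos t - r)) has_integral
      ((1 - r\<^sup>2) * Gint r (n+1) (2*j+1))) {0..pi}" using A0 by simp
  then show ?thesis unfolding Gint_def by (rule integral_unique)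
qed

lemma G_nstep:
  "Gint r (k+2) 1 = 2 * Aint (k+1) 1 + 2 * r * Gint r (k+1) 1 - Gint r k 1"
proof -
  have "((\<lambda>t. 2 * (sin (real (k+1) * t) * sin t ^ 1) + 2 * r * (sin (real (k+1) * t) * sin t ^ 1 / (cos t - r))
      - sin (real k * t) * sin t ^ 1 / (cos t - r)) has_integral
      (2 * Aint (k+1) 1 + 2 * r * Gint r (k+1) 1 - Gint r k 1)) {0..pi}"
    by (intro has_integral_diff has_integral_add has_integral_mult_right A_has G_has)
  moreover have "2 * (sin (real (k+1) * t) * sin t ^ 1) + 2 * r * (sin (real (k+1) * t) * sin t ^ 1 / (cos t - r))
      - sin (real k * t) * sin t ^ 1 / (cos t - r) = sin (real (k+2) * t) * sin t ^ 1 / (cos t - r)" for t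
  proof -
    have e1: "real (k+2) * t = real (k+1) * t + t" by (simp add: algebra_simps)
    have e2: "real k * t = real (k+1) * t - t" by (simp add: algebra_simps)
    have sc: "sin (real (k+2) * t) = 2 * cos t * sin (real (k+1) * t) - sin (real k * t)"
      unfolding e1 e2 sin_add sin_diff by simp
    have alg: "2*X + 2*r*(X/(c-r)) - Z/(c-r) = (2*c*X - Z)/(c-r)" if h: "c - r \<noteq> 0" for X Z c
    proof -
      have "(2*c*X - Z)/(c-r) = (2*X*(c-r) + 2*r*X - Z)/(c-r)"
        by (rule arg_cong[where f="\<lambda>u. u/(c-r)"]) (simp add: algebra_simps)
      also have "\<dots> = 2*X*(c-r)/(c-r) + 2*r*X/(c-r) - Z/(c-r)"
        by (simp add: add_divide_distrib diff_divide_distrib)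
      also have "\<dots> = 2*X + 2*r*(X/(c-r)) - Z/(c-r)" using h by simp
      finally show ?thesis by simp
    qed
    show ?thesis unfolding sc
      using alg[OF D_nz'[of t], of "sin (real (k+1) * t) * sin t ^ 1" "sin (real k * t) * sin t ^ 1"]
      by (simp add: algebra_simps)
  qed
  ultimately have "((\<lambda>t. sin (real (k+2) * t) * sin t ^ 1 / (cos t - r)) has_integral
      (2 * Aint (k+1) 1 + 2 * r * Gint r (k+1) 1 - Gint r k 1)) {0..pi}" by simp
  then show ?thesis unfolding Gint_def by (rule integral_unique)
qed

lemma G0: "Gint r 0 p = 0"
  unfolding Gint_def by simp


lemma rho_eq: "(rho r)\<^sup>2 = 2 * r * rho r - 1"
proof -
  have rn: "r \<noteq> 0" using r by auto
  have sg: "(\<bar>r\<bar>/r)\<^sup>2 = 1" using rn by (simp add: power_divide)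
  have sq: "(sqrt (r\<^sup>2 - 1))\<^sup>2 = r\<^sup>2 - 1" using r2_gt by simp
  have "(rho r)\<^sup>2 - 2 * r * rho r + 1 = (\<bar>r\<bar>/r)\<^sup>2 * (sqrt (r\<^sup>2 - 1))\<^sup>2 - r\<^sup>2 + 1"
  proof -
    have gen: "\<And>a b. (r - a*b)\<^sup>2 - 2*r*(r - a*b) + 1 = a\<^sup>2*b\<^sup>2 - r\<^sup>2 + 1"
      by (simp add: power2_eq_square algebra_simps)
    show ?thesis unfolding rho_def by (rule gen)
  qed
  also have "\<dots> = 0" unfolding sg sq by simp
  finally show ?thesis by simp
qed

lemma G11: "Gint r 1 1 = - pi * rho r"
proof -
  have "((\<lambda>t. (1 - r\<^sup>2) * (1 / (cos t - r)) - cos t - r) has_integral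
       ((1 - r\<^sup>2) * (-(\<bar>r\<bar>/r) * pi / sqrt (r\<^sup>2 - 1)) - 0 - r * pi)) {0..pi}"
  proof (intro has_integral_diff has_integral_mult_right B_int)
    have "(cos has_integral (sin pi - sin 0)) {0..pi}"
      by (rule fundamental_theorem_of_calculus)
        (auto intro!: derivative_eq_intros simp: has_real_derivative_iff_has_vector_derivative[symmetric])
    then show "(cos has_integral 0) {0..pi}" by simp
    show "((\<lambda>t. r) has_integral r * pi) {0..pi}"
      using has_integral_const_real[of r 0 pi] by (simp add: mult.commute)
  qed
  moreover have "(1 - r\<^sup>2) * (1 / (cos t - r)) - cos t - r = sin (real 1 * t) * sin t ^ 1 / (cos t - r)" for t
  proof -
    have s: "sin t * sin t = 1 - cos t * cos t" using sin_squared_eq[of t] by (simp add: power2_eq_square)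
    show ?thesis using D_nz'[of t] by (simp add: field_simps s power2_eq_square)
  qed
  moreover have "(1 - r\<^sup>2) * (-(\<bar>r\<bar>/r) * pi / sqrt (r\<^sup>2 - 1)) - 0 - r * pi = - pi * rho r"
  proof -
    define S where "S = sqrt (r\<^sup>2 - 1)"
    have rn: "r \<noteq> 0" using r by auto
    have sq: "1 - r\<^sup>2 = - (S * S)" unfolding S_def using r2_gt by simp
    have sp: "S > 0" unfolding S_def using r2_gt by simp
    show ?thesis unfolding rho_def S_def[symmetric] sq
      using sp rn by (simp add: field_simps)
  qed
  ultimately have "((\<lambda>t. sin (real 1 * t) * sin t ^ 1 / (cos t - r)) has_integral (- pi * rho r)) {0..pi}"
    by simp
  then show ?thesis unfolding Gint_def by (rule integral_unique)
qed

lemma G_base: "Gint r (n+1) 1 = - pi * rho r ^ (n+1) \<and> Gint r (n+2) 1 = - pi * rho r ^ (n+2)"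
proof (induction n)
  case 0
  have "Gint r 2 1 = 2 * Aint 1 1 + 2 * r * Gint r 1 1 - Gint r 0 1"
    using G_nstep[of 0] by (simp add: eval_nat_numeral)
  also have "\<dots> = pi - 2 * r * pi * rho r" unfolding A11 G11 G0 by simp
  also have "\<dots> = - pi * rho r ^ 2" by (subst rho_eq) (simp add: algebra_simps)
  finally show ?case using G11 by (simp add: eval_nat_numeral)
next
  case (Suc n)
  have "Gint r (n+3) 1 = 2 * Aint (n+2) 1 + 2 * r * Gint r (n+2) 1 - Gint r (n+1) 1"
    using G_nstep[of "n+1"] by (simp add: numeral_3_eq_3)
  also have "\<dots> = - pi * rho r ^ (n+1) * (2 * r * rho r - 1)"
    using Suc.IH A1_zero[of "n+2"] by (simp add: algebra_simps)
  also have "\<dots> = - pi * rho r ^ (n+3)"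
  proof -
    have "rho r ^ (n+3) = rho r ^ (n+1) * (rho r)\<^sup>2"
      unfolding power_add[symmetric] by (simp add: eval_nat_numeral)
    then show ?thesis unfolding rho_eq by simp
  qed
  finally show ?case using Suc.IH by (simp add: numeral_3_eq_3)
qed

lemma G_main: "n \<ge> 2 * j \<Longrightarrow> Gint r (n+1) (2*j+1) = pi * (-1)^(j+1) * (r\<^sup>2 - 1)^j * rho r ^ (n+1)"
proof (induction j arbitrary: n)
  case 0 then show ?case using G_base[of n] by simp
next
  case (Suc j)
  have "Gint r (n+1) (2 * Suc j + 1) = Gint r (n+1) (2*j+3)" by (simp add: eval_nat_numeral)
  also have "\<dots> = (1 - r\<^sup>2) * Gint r (n+1) (2*j+1)" using Suc.prems by (intro G_mstep) simp
  also have "\<dots> = (1 - r\<^sup>2) * (pi * (-1)^(j+1) * (r\<^sup>2 - 1)^j * rho r ^ (n+1))"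
    using Suc.prems Suc.IH[of n] by simp
  also have "\<dots> = pi * (-1)^(Suc j+1) * (r\<^sup>2 - 1)^(Suc j) * rho r ^ (n+1)"
    by (simp add: algebra_simps)
  finally show ?case .
qed

end


theorem mainTheorem10:
  fixes m n :: nat and r :: real
  assumes "m \<ge> 1" and "int n \<ge> 2 * int m - 2" and "\<bar>r\<bar> > 1"
  shows "((\<lambda>s. chebU n s * (1 - s\<^sup>2) powr (real m - 1/2) / (s - r)) has_integral
           (pi * (-1) ^ m * (r\<^sup>2 - 1) ^ (m - 1) * (r - (\<bar>r\<bar> / r) * sqrt (r\<^sup>2 - 1)) ^ (n + 1)))
         {-1..1}"
proof -
  define j where "j = m - 1"
  have mj: "m = j + 1" unfolding j_def using assms(1) by simp
  have nj: "n \<ge> 2 * j" using assms(2) unfolding mj by simp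
  have r: "\<bar>r\<bar> > 1" by (rule assms(3))
  define f where "f s = sin (real (n+1) * arccos s) * (1 - s\<^sup>2) ^ j / (s - r)" for s
  have snz: "s - r \<noteq> 0" if "s \<in> {-1..1}" for s
    using that r by auto
  have eq1: "chebU n s * (1 - s\<^sup>2) powr (real m - 1/2) / (s - r) = f s" if s: "s \<in> {-1..1}" for s
  proof (cases "s = 1 \<or> s = -1")
    case True
    then show ?thesis
    proof
      assume "s = 1" then show ?thesis unfolding f_def chebU_def by simp
    next
      assume "s = -1"
      moreover have "sin (real (n+1) * pi) = 0" by (rule sin_npi)
      ultimately show ?thesis unfolding f_def chebU_def by simp
    qed
  next
    case False
    then have s1: "-1 < s" "s < 1" using s by auto
    define x where "x = 1 - s\<^sup>2"
    have xp: "x > 0" unfolding x_def using s1 by (simp add: abs_square_less_1)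
    have ch: "chebU n s = sin (real (n+1) * arccos s) / sqrt x"
      unfolding chebU_def x_def using s1 by (simp add: sin_arccos)
    have pw: "x powr (real m - 1/2) = x ^ j * sqrt x"
    proof -
      have "real m - 1/2 = real j + 1/2" unfolding mj by simp
      then have "x powr (real m - 1/2) = x powr (real j) * x powr (1/2)"
        by (simp add: powr_add)
      also have "\<dots> = x ^ j * sqrt x" using xp by (simp add: powr_realpow powr_half_sqrt)
      finally show ?thesis .
    qed
    have sqp: "sqrt x > 0" using xp by simp
    show ?thesis unfolding ch x_def[symmetric] pw f_def using sqp by simp
  qed
  have fcont: "continuous_on {-1..1} f"
    unfolding f_def by (intro continuous_intros) (use snz in auto)
  have sub: "((\<lambda>t. (- sin t) *\<^sub>R f (cos t)) has_integral
      (integral {cos 0..cos pi} f - integral {cos pi..cos 0} f)) {0..pi}"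
    by (rule has_integral_substitution_general[of "{}" 0 pi cos "-1" 1 f "\<lambda>t. - sin t"])
       (auto intro!: derivative_eq_intros continuous_intros fcont)
  then have sub2: "((\<lambda>t. (- sin t) * f (cos t)) has_integral (- integral {-1..1} f)) {0..pi}"
    by simp
  have peq: "(- sin t) * f (cos t) = - (sin (real (n+1) * t) * sin t ^ (2*j+1) / (cos t - r))"
    if t: "t \<in> {0..pi}" for t
  proof -
    have ac: "arccos (cos t) = t" using t by (simp add: arccos_cos)
    have "(1 - (cos t)\<^sup>2) ^ j = sin t ^ (2*j)"
      by (simp add: sin_squared_eq[symmetric] power_mult)
    then show ?thesis unfolding f_def ac by (simp add: power_add algebra_simps)
  qed
  have negi: "((\<lambda>t. - (sin (real (n+1) * t) * sin t ^ (2*j+1) / (cos t - r))) has_integral (- integral {-1..1} f)) {0..pi}"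
    by (rule has_integral_cong[THEN iffD1, OF _ sub2]) (rule peq)
  have "((\<lambda>t. sin (real (n+1) * t) * sin t ^ (2*j+1) / (cos t - r)) has_integral (integral {-1..1} f)) {0..pi}"
    using has_integral_neg[OF negi] by simp
  then have "integral {-1..1} f = Gint r (n+1) (2*j+1)"
    unfolding Gint_def by (simp add: integral_unique)
  also have "\<dots> = pi * (-1)^(j+1) * (r\<^sup>2 - 1)^j * rho r ^ (n+1)"
    by (rule G_main[OF r nj])
  finally have val: "integral {-1..1} f = pi * (-1) ^ m * (r\<^sup>2 - 1) ^ (m - 1) * (r - (\<bar>r\<bar> / r) * sqrt (r\<^sup>2 - 1)) ^ (n + 1)"
    unfolding mj rho_def by simp
  have "(f has_integral integral {-1..1} f) {-1..1}"
    by (rule integrable_integral[OF integrable_continuous_interval[OF fcont]])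
  then have "(f has_integral (pi * (-1) ^ m * (r\<^sup>2 - 1) ^ (m - 1) * (r - (\<bar>r\<bar> / r) * sqrt (r\<^sup>2 - 1)) ^ (n + 1))) {-1..1}"
    unfolding val .
  then show ?thesis
    by (rule has_integral_cong[THEN iffD1, rotated]) (rule eq1[symmetric])
qed

end
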